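(* Let $P$ be a finite poset, $\phi\in\mathrm{Hom}(P,\mathbb{N})$, $m=\overline{\Lambda}\phi$ and $b\in P$. Then the longest $b$-chain in $m$ has length $\phi(b)$.
   Context: $\mathbb{N}=\{0,1,\dots\}$; $\mathrm{Hom}(P,\mathbb{N})$ is the set of isotone maps $P\to\mathbb{N}$. The ascent is $\Lambda\phi=\{(p,i)\in P\times\mathbb{N}:\phi(q)\le i<\phi(p)\ \forall q<p\}$ and $\overline{\Lambda}\phi=\prod_{(p,i)\in\Lambda\phi}x_p\in k[x_P]$. For $b\in P$, a $b$-chain is a multichain $p_1\le p_2\le\dots\le p_r$ in $P$ with $p_r\le b$; its length is $r$; it is in a monomial $m$ if $\prod_{i=1}^r x_{p_i}$ divides $m$. *)

theory Defs
  imports Main "HOL-Library.Multiset"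
begin

text \<open>The finite poset P is a type of class finite with a partial order.
  A monomial in k[x_P] is represented by its exponent multiset over P;
  divisibility of monomials is multiset inclusion.\<close>

definition ascent :: "('a::order \<Rightarrow> nat) \<Rightarrow> ('a \<times> nat) set" where
  "ascent \<phi> = {(p, i). (\<forall>q. q < p \<longrightarrow> \<phi> q \<le> i) \<and> i < \<phi> p}"

definition ascent_monomial :: "('a::{order,finite} \<Rightarrow> nat) \<Rightarrow> 'a multiset" where
  "ascent_monomial \<phi> = (\<Sum>p\<in>UNIV. replicate_mset (card {i. (p, i) \<in> ascent \<phi>}) p)"

definition b_chain :: "'a::order \<Rightarrow> 'a list \<Rightarrow> bool" where
  "b_chain b c \<longleftrightarrow> sorted_wrt (\<le>) c \<and> (c \<noteq> [] \<longrightarrow> last c \<le> b)"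

definition chain_in :: "'a list \<Rightarrow> 'a multiset \<Rightarrow> bool" where
  "chain_in c m \<longleftrightarrow> mset c \<subseteq># m"

end

theory Submission
  imports Defs
begin

definition Mx :: "('a::{order,finite} \<Rightarrow> nat) \<Rightarrow> 'a \<Rightarrow> nat" where
  "Mx \<phi> x = Max (insert 0 (\<phi> ` {q. q < x}))"

lemma Mx_ge: "(y::'a::{order,finite}) < x \<Longrightarrow> \<phi> y \<le> Mx \<phi> x"
  unfolding Mx_def by (rule Max_ge) auto

lemma Mx_le: "mono \<phi> \<Longrightarrow> Mx \<phi> (x::'a::{order,finite}) \<le> \<phi> x"
  unfolding Mx_def by (rule Max.boundedI) (auto simp: mono_def)

lemma Mx_attain: "Mx \<phi> (x::'a::{order,finite}) \<noteq> 0 \<Longrightarrow> \<exists>q<x. \<phi> q = Mx \<phi> x"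
proof -
  assume a: "Mx \<phi> x \<noteq> 0"
  have "Mx \<phi> x \<in> insert 0 (\<phi> ` {q. q < x})" unfolding Mx_def by (rule Max_in) auto
  with a show ?thesis by auto
qed

lemma count_m: "count (ascent_monomial \<phi>) (x::'a::{order,finite}) = \<phi> x - Mx \<phi> x"
proof -
  have "count (ascent_monomial \<phi>) x = (\<Sum>p\<in>UNIV. count (replicate_mset (card {i. (p, i) \<in> ascent \<phi>}) p) x)"
    unfolding ascent_monomial_def by (simp add: count_sum)
  also have "\<dots> = (\<Sum>p\<in>UNIV. if p = x then card {i. (x, i) \<in> ascent \<phi>} else 0)"
    by (rule sum.cong) auto
  also have "\<dots> = card {i. (x, i) \<in> ascent \<phi>}" by simp
  also have "{i. (x, i) \<in> ascent \<phi>} = {Mx \<phi> x..<\<phi> x}"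
  proof -
    have "(\<forall>q. q < x \<longrightarrow> \<phi> q \<le> i) \<longleftrightarrow> Mx \<phi> x \<le> i" for i
      unfolding Mx_def by (subst Max_le_iff) auto
    thus ?thesis unfolding ascent_def by auto
  qed
  finally show ?thesis by simp
qed

lemma sorted_last: "sorted_wrt (\<le>) c \<Longrightarrow> z \<in> set c \<Longrightarrow> (z::'a::order) \<le> last c"
proof (induction c)
  case Nil thus ?case by simp
next
  case (Cons a c)
  show ?case
  proof (cases "c = []")
    case True thus ?thesis using Cons by simp
  next
    case False
    hence "last c \<in> set c" by simp
    thus ?thesis using Cons False by (auto intro: order_trans)
  qed
qed

lemma upper:
  assumes "mono \<phi>"
  shows "sorted_wrt (\<le>) c \<Longrightarrow> (\<forall>z\<in>set c. z \<le> b) \<Longrightarrow> mset c \<subseteq># ascent_monomial \<phi>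
     \<Longrightarrow> length c \<le> \<phi> (b::'a::{order,finite})"
proof (induction "length c" arbitrary: c b rule: less_induct)
  case less
  show ?case
  proof (cases "c = []")
    case True thus ?thesis by simp
  next
    case False
    define x where "x = last c"
    have xin: "x \<in> set c" using False x_def by simp
    have xb: "x \<le> b" using less.prems xin by auto
    define c' where "c' = filter (\<lambda>y. y \<noteq> x) c"
    have len: "length c = length c' + count (mset c) x"
    proof -
      have e: "((=) x) = (\<lambda>y. \<not> (y \<noteq> x))" by auto
      show ?thesis unfolding c'_def count_mset count_list_eq_length_filter e
        using sum_length_filter_compl[of "\<lambda>y. y \<noteq> x" c] by simp
    qed
    have cnt: "count (mset c) x \<le> \<phi> x - Mx \<phi> x"
      using less.prems(3) count_m[of \<phi> x] by (metis mset_subset_eq_count)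
    have lt: "\<forall>z\<in>set c'. z < x"
      using sorted_last[OF less.prems(1)] unfolding c'_def x_def by (auto simp: order.order_iff_strict)
    have "length c' \<le> Mx \<phi> x"
    proof (cases "c' = []")
      case True thus ?thesis by simp
    next
      case F2: False
      define y where "y = last c'"
      have yin: "y \<in> set c'" using F2 y_def by simp
      have sc': "sorted_wrt (\<le>) c'" unfolding c'_def using less.prems(1) by (simp add: sorted_wrt_filter)
      have "length c' < length c" using xin unfolding c'_def
        by (metis (mono_tags, lifting) length_filter_less)
      moreover have "\<forall>z\<in>set c'. z \<le> y" using sorted_last[OF sc'] y_def by auto
      moreover have "mset c' \<subseteq># ascent_monomial \<phi>"
        using less.prems(3) unfolding c'_def
        by (metis mset_filter multiset_filter_subset subset_mset.order_trans)
      ultimately have "length c' \<le> \<phi> y" using less.hyps sc' by blast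
      also have "\<phi> y \<le> Mx \<phi> x" using Mx_ge lt yin by blast
      finally show ?thesis .
    qed
    hence "length c \<le> \<phi> x" using len cnt Mx_le[OF assms, of x] by linarith
    also have "\<phi> x \<le> \<phi> b" using assms xb by (simp add: mono_def)
    finally show ?thesis .
  qed
qed

lemma exist:
  assumes "mono \<phi>"
  shows "\<exists>c. sorted_wrt (\<le>) c \<and> (\<forall>z\<in>set c. z \<le> x) \<and> length c = \<phi> x
     \<and> (\<forall>z. count (mset c) z \<le> count (ascent_monomial \<phi>) (z::'a::{order,finite}))"
proof (induction x rule: measure_induct_rule[where f = "\<lambda>x. card {y. y < x}"])
  case (less x)
  obtain cq where cq: "sorted_wrt (\<le>) cq" "\<forall>z\<in>set cq. z < x" "length cq = Mx \<phi> x"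
    "\<forall>z. count (mset cq) z \<le> count (ascent_monomial \<phi>) z"
  proof (cases "Mx \<phi> x = 0")
    case True thus ?thesis using that[of "[]"] by simp
  next
    case False
    then obtain q where q: "q < x" "\<phi> q = Mx \<phi> x" using Mx_attain by blast
    have "{y. y < q} \<subset> {y. y < x}" using q(1) by (auto intro: less_trans)
    hence "card {y. y < q} < card {y. y < x}" by (simp add: psubset_card_mono)
    then obtain c where "sorted_wrt (\<le>) c" "\<forall>z\<in>set c. z \<le> q" "length c = \<phi> q"
      "\<forall>z. count (mset c) z \<le> count (ascent_monomial \<phi>) z" using less by blast
    thus ?thesis using that[of c] q by (auto intro: le_less_trans)
  qed
  define c where "c = cq @ replicate (\<phi> x - Mx \<phi> x) x"
  have sr: "sorted_wrt (\<le>) (replicate n x)" for n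
    by (induction n) auto
  have "sorted_wrt (\<le>) c" unfolding c_def using cq(1,2) sr
    by (auto simp: sorted_wrt_append order.strict_implies_order)
  moreover have "\<forall>z\<in>set c. z \<le> x" unfolding c_def using cq(2) by auto
  moreover have "length c = \<phi> x" unfolding c_def using cq(3) Mx_le[OF assms, of x] by simp
  moreover have "count (mset c) z \<le> count (ascent_monomial \<phi>) z" for z
  proof (cases "z = x")
    case True
    have "count (mset cq) x = 0" using cq(2) by (auto simp: count_eq_zero_iff)
    thus ?thesis using True count_m[of \<phi> x] unfolding c_def by simp
  next
    case False thus ?thesis using cq(4) unfolding c_def by simp
  qed
  ultimately show ?case by blast
qed

theorem lemma3p9:
  fixes \<phi> :: "'a::{order,finite} \<Rightarrow> nat" and b :: 'a and m :: "'a multiset"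
  assumes "mono \<phi>"
    and "m = ascent_monomial \<phi>"
  shows "(\<exists>c. b_chain b c \<and> chain_in c m \<and> length c = \<phi> b)
       \<and> (\<forall>c. b_chain b c \<and> chain_in c m \<longrightarrow> length c \<le> \<phi> b)"
proof
  obtain c where c: "sorted_wrt (\<le>) c" "\<forall>z\<in>set c. z \<le> b" "length c = \<phi> b"
     "\<forall>z. count (mset c) z \<le> count (ascent_monomial \<phi>) z"
    using exist[OF assms(1)] by blast
  have "b_chain b c" unfolding b_chain_def using c(1,2) by auto
  moreover have "chain_in c m" unfolding chain_in_def assms(2) using c(4)
    by (simp add: subseteq_mset_def)
  ultimately show "\<exists>c. b_chain b c \<and> chain_in c m \<and> length c = \<phi> b" using c(3) by blast
next
  show "\<forall>c. b_chain b c \<and> chain_in c m \<longrightarrow> length c \<le> \<phi> b"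
  proof (intro allI impI)
    fix c assume h: "b_chain b c \<and> chain_in c m"
    hence s: "sorted_wrt (\<le>) c" and "c \<noteq> [] \<longrightarrow> last c \<le> b" unfolding b_chain_def by auto
    hence "\<forall>z\<in>set c. z \<le> b" using sorted_last[OF s] by (auto intro: order_trans)
    thus "length c \<le> \<phi> b" using upper[OF assms(1) s] h assms(2) unfolding chain_in_def by simp
  qed
qed

end
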